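(* Let $F\in\mathbb C[x,y,s,t]$, and let $G\in\mathbb C[x,y]\setminus\mathbb C$ and $K\in\mathbb C[s,t]\setminus\mathbb C$ be squarefree. Then $Z(G)\times Z(K)\subset Z(F)$ if and only if $F$ is $(G,K)$-Cartesian.
   Context: $Z(\cdot)$ denotes the complex zero set; $Z(G)\subset\mathbb C^2$ in coordinates $(x,y)$, $Z(K)\subset\mathbb C^2$ in coordinates $(s,t)$, and $Z(F)\subset\mathbb C^4$. A polynomial is squarefree if it has no repeated irreducible factors. $F$ is $(G,K)$-Cartesian if $F=G(x,y)H(x,y,s,t)+K(s,t)L(x,y,s,t)$ for some $H,L\in\mathbb C[x,y,s,t]$. *)

theory Defs
  imports "HOL-Computational_Algebra.Computational_Algebra"
begin

text \<open>C[x,y] = (C[x])[y] : type complex poly poly, x innermost, y outermost.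
  C[s,t] = (C[s])[t] : type complex poly poly, s innermost, t outermost.
  C[x,y,s,t] = (((C[x])[y])[s])[t] : type complex poly poly poly poly.\<close>

type_synonym cpoly2 = "complex poly poly"
type_synonym cpoly4 = "complex poly poly poly poly"

definition eval2 :: "cpoly2 \<Rightarrow> complex \<Rightarrow> complex \<Rightarrow> complex" where
  "eval2 P a b = poly (poly P [:b:]) a"

definition eval4 :: "cpoly4 \<Rightarrow> complex \<Rightarrow> complex \<Rightarrow> complex \<Rightarrow> complex \<Rightarrow> complex" where
  "eval4 P x y s t = poly (poly (poly (poly P [:[:[:t:]:]:]) [:[:s:]:]) [:y:]) x"

definition is_const2 :: "cpoly2 \<Rightarrow> bool" where
  "is_const2 P \<longleftrightarrow> (\<exists>c. P = [:[:c:]:])"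

definition embed_xy :: "cpoly2 \<Rightarrow> cpoly4" where
  "embed_xy G = [:[:G:]:]"

definition embed_st :: "cpoly2 \<Rightarrow> cpoly4" where
  "embed_st K = map_poly (map_poly (\<lambda>c. [:[:c:]:])) K"

definition cartesian :: "cpoly2 \<Rightarrow> cpoly2 \<Rightarrow> cpoly4 \<Rightarrow> bool" where
  "cartesian G K F \<longleftrightarrow> (\<exists>H L. F = embed_xy G * H + embed_st K * L)"

end

theory Submission
  imports Defs "HOL-Computational_Algebra.Field_as_Ring"
begin


definition rhom :: "('a::comm_ring_1 \<Rightarrow> 'b::comm_ring_1) \<Rightarrow> bool" where
  "rhom f \<longleftrightarrow> f 0 = 0 \<and> f 1 = 1 \<and> (\<forall>a b. f (a + b) = f a + f b) \<and> (\<forall>a b. f (a * b) = f a * f b)"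

lemma rhomD:
  assumes "rhom f"
  shows "f 0 = 0" "f 1 = 1" "f (a + b) = f a + f b" "f (a * b) = f a * f b"
  using assms by (auto simp: rhom_def)

lemma rhom_uminus: assumes "rhom f" shows "f (- a) = - f a"
proof -
  have "f (- a + a) = f (- a) + f a" by (rule rhomD(3)[OF assms])
  hence "f (- a) + f a = 0" by (simp add: rhomD[OF assms])
  thus ?thesis by (simp add: eq_neg_iff_add_eq_0)
qed

lemma rhom_diff: assumes "rhom f" shows "f (a - b) = f a - f b"
proof -
  have "f (a - b) = f (a + - b)" by simp
  also have "\<dots> = f a - f b" by (simp only: rhomD[OF assms] rhom_uminus[OF assms]) simp
  finally show ?thesis .
qed

lemma rhom_sum: assumes "rhom f" shows "f (sum g A) = (\<Sum>x\<in>A. f (g x))"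
  by (induction A rule: infinite_finite_induct) (auto simp: rhomD[OF assms])

lemma map_poly_add_hom: assumes "rhom f"
  shows "map_poly f (p + q) = map_poly f p + map_poly f q"
  by (intro poly_eqI) (simp add: coeff_map_poly rhomD[OF assms])

lemma map_poly_mult_hom: assumes "rhom f"
  shows "map_poly f (p * q) = map_poly f p * map_poly f q"
proof (induction p)
  case 0 then show ?case by simp
next
  case (pCons a p)
  have "map_poly f (pCons a p * q) = map_poly f (smult a q + pCons 0 (p * q))" by simp
  also have "\<dots> = smult (f a) (map_poly f q) + pCons 0 (map_poly f p * map_poly f q)"
    by (simp add: map_poly_add_hom[OF assms] map_poly_smult map_poly_pCons rhomD[OF assms] pCons.IH)
  also have "\<dots> = map_poly f (pCons a p) * map_poly f q"
    by (simp add: map_poly_pCons rhomD[OF assms])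
  finally show ?case .
qed

lemma rhom_map_poly: assumes "rhom f" shows "rhom (map_poly f)"
  unfolding rhom_def using map_poly_add_hom[OF assms] map_poly_mult_hom[OF assms] rhomD[OF assms]
  by (simp add: map_poly_1)

lemma poly_map_poly_hom: assumes "rhom f"
  shows "poly (map_poly f p) (f a) = f (poly p a)"
  by (induction p) (simp_all add: map_poly_pCons rhomD[OF assms])

lemma rhom_const: "rhom (\<lambda>c. [:c:])"
  by (simp add: rhom_def)

lemma one11: "[:[:1:]:] = 1" by (simp add: pCons_one)

lemma rhom_E: "rhom (\<lambda>r. [:[:r:]:])"
  by (simp add: rhom_def one11)

lemma rhom_h: "rhom (\<lambda>c::complex. [:[:c:]:] :: cpoly2)"
  by (simp add: rhom_def one11)

lemma rhom_poly: "rhom (\<lambda>p. poly p a)"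
  by (simp add: rhom_def)

lemma rhom_comp: "rhom f \<Longrightarrow> rhom g \<Longrightarrow> rhom (f \<circ> g)"
  by (simp add: rhom_def)

lemma rhom_eval2: "rhom (\<lambda>P. eval2 P a b)"
  unfolding eval2_def by (simp add: rhom_def)

lemma rhom_eval4: "rhom (\<lambda>P. eval4 P x y s t)"
  unfolding eval4_def by (simp add: rhom_def)

lemma rhom_embed_xy: "rhom embed_xy"
  unfolding embed_xy_def by (simp add: rhom_def one11)

lemma rhom_embed_st: "rhom embed_st"
  unfolding embed_st_def by (intro rhom_map_poly rhom_h)

lemma eval2_const[simp]: "eval2 [:[:c:]:] a b = c"
  by (simp add: eval2_def)

lemma eval4_embed_xy[simp]: "eval4 (embed_xy r) x y s t = eval2 r x y"
  by (simp add: eval4_def embed_xy_def eval2_def)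

lemma eval4_embed_st[simp]: "eval4 (embed_st b) x y s t = eval2 b s t"
proof -
  let ?h = "\<lambda>c::complex. [:[:c:]:] :: cpoly2"
  have 1: "poly (embed_st b) [:[:[:t:]:]:] = map_poly ?h (poly b [:t:])"
    unfolding embed_st_def
    using poly_map_poly_hom[OF rhom_map_poly[OF rhom_h], of b "[:t:]"] by (simp add: map_poly_pCons)
  have 2: "poly (map_poly ?h c) [:[:s:]:] = [:[:poly c s:]:]" for c
    using poly_map_poly_hom[OF rhom_h, of c s] by simp
  show ?thesis unfolding eval4_def 1 2 by (simp add: eval2_def)
qed

lemma embed_xy_const_st: "embed_xy [:[:c:]:] = embed_st [:[:c:]:]"
  by (simp add: embed_xy_def embed_st_def map_poly_pCons)

lemma eval2_alt: "eval2 P a b = poly (map_poly (\<lambda>c. poly c a) P) b"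
  unfolding eval2_def
  by (induction P) (simp_all add: map_poly_pCons)



lemma smult_as_mult: "smult c q = [:c:] * q" by simp

lemma bezout_const:
  fixes p f :: cpoly2
  assumes pr: "prime_elem p" and dp: "degree p > 0" and nd: "\<not> p dvd f"
  shows "\<exists>A B D. D \<noteq> 0 \<and> A * p + B * f = [:D:]"
proof -
  define S where "S = {g. g \<noteq> 0 \<and> (\<exists>A B. g = A*p + B*f)}"
  have p0: "p \<noteq> 0" using pr by auto
  have "p = 1*p + 0*f" by simp
  hence "p \<in> S" unfolding S_def using p0 by blast
  define d where "d = (LEAST n. \<exists>g\<in>S. degree g = n)"
  have ex: "\<exists>n. \<exists>g\<in>S. degree g = n" using \<open>p \<in> S\<close> by blast
  have "\<exists>g\<in>S. degree g = d" unfolding d_def by (rule LeastI_ex[OF ex])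
  then obtain g where gS: "g \<in> S" and gd: "degree g = d" by blast
  have min: "d \<le> degree h" if "h \<in> S" for h unfolding d_def using that by (auto intro: Least_le)
  from gS obtain A B where g0: "g \<noteq> 0" and gAB: "g = A*p + B*f" unfolding S_def by blast
  show ?thesis
  proof (cases "d = 0")
    case True
    hence hg: "g = [:coeff g 0:]" using gd by (simp add: degree_0_id)
    have "coeff g 0 \<noteq> 0" using g0 leading_coeff_0_iff[of g] gd True by simp
    moreover have "A*p + B*f = [:coeff g 0:]" by (rule trans[OF gAB[symmetric] hg])
    ultimately show ?thesis by blast
  next
    case False
    have key: "\<exists>c qq. c \<noteq> 0 \<and> smult c q = g * qq" if "q = A' * p + B' * f" for q A' B'
    proof -
      obtain qq r where pd: "pseudo_divmod q g = (qq, r)" by (cases "pseudo_divmod q g") auto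
      define c where "c = lead_coeff g ^ (Suc (degree q) - degree g)"
      have c0: "c \<noteq> 0" using g0 by (simp add: c_def)
      have eq: "smult c q = g * qq + r" using pseudo_divmod(1)[OF g0 pd] by (simp add: c_def)
      have r: "r = 0 \<or> degree r < degree g" using pseudo_divmod(2)[OF g0 pd] .
      have "r = smult c q - g * qq" using eq by simp
      also have "\<dots> = [:c:] * (A' * p + B' * f) - (A * p + B * f) * qq" using that gAB by simp
      also have "\<dots> = ([:c:] * A' - qq * A) * p + ([:c:] * B' - qq * B) * f"
        by (simp only: algebra_simps)
      finally have "r = ([:c:] * A' - qq * A) * p + ([:c:] * B' - qq * B) * f" .
      hence rS: "r \<noteq> 0 \<Longrightarrow> r \<in> S" unfolding S_def by blast
      have "r = 0"
      proof (rule ccontr)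
        assume "r \<noteq> 0"
        hence "r \<in> S" by (rule rS)
        hence "d \<le> degree r" by (rule min)
        with r \<open>r \<noteq> 0\<close> gd show False by simp
      qed
      thus ?thesis using eq c0 by auto
    qed
    obtain c1 q1 where c1: "c1 \<noteq> 0" and e1: "smult c1 p = g * q1" using key[of p 1 0] by auto
    obtain c2 q2 where c2: "c2 \<noteq> 0" and e2: "smult c2 f = g * q2" using key[of f 0 1] by auto
    have "smult c1 p = p * [:c1:]" by simp
    hence "p dvd smult c1 p" by (rule dvdI)
    hence "p dvd g * q1" using e1 by simp
    hence "p dvd g \<or> p dvd q1" using pr prime_elem_dvd_mult_iff by blast
    moreover have "\<not> p dvd q1"
    proof
      assume "p dvd q1"
      then obtain q1' where "q1 = p * q1'" by (auto elim: dvdE)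
      hence "[:c1:] * p = (g * q1') * p" using e1 by (simp add: algebra_simps)
      hence "[:c1:] = g * q1'" by (rule mult_right_cancel[OF p0, THEN iffD1])
      hence "g dvd [:c1:]" by (rule dvdI)
      hence "degree g \<le> degree [:c1:]" using c1 by (intro dvd_imp_degree_le) auto
      thus False using False gd by simp
    qed
    ultimately have "p dvd g" by blast
    hence "p dvd g * q2" by simp
    hence "p dvd [:c2:] * f" using e2 by simp
    hence "p dvd [:c2:] \<or> p dvd f" using pr prime_elem_dvd_mult_iff by blast
    moreover have "\<not> p dvd [:c2:]"
    proof
      assume "p dvd [:c2:]"
      hence "degree p \<le> degree [:c2:]" using c2 by (intro dvd_imp_degree_le) auto
      thus False using dp by simp
    qed
    ultimately show ?thesis using nd by blast
  qed
qed



lemma vanish_prime_deg: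
  fixes p f :: cpoly2
  assumes pr: "prime_elem p" and dp: "degree p > 0"
    and van: "\<forall>s t. eval2 p s t = 0 \<longrightarrow> eval2 f s t = 0"
  shows "p dvd f"
proof (rule ccontr)
  assume nd: "\<not> p dvd f"
  obtain A B D where D0: "D \<noteq> 0" and eq: "A * p + B * f = [:D:]"
    using bezout_const[OF pr dp nd] by blast
  have p0: "p \<noteq> 0" using pr by auto
  have "D * lead_coeff p \<noteq> 0" using D0 p0 by simp
  then obtain s0 where s0: "poly (D * lead_coeff p) s0 \<noteq> 0"
    using poly_all_0_iff_0 by blast
  define ps where "ps = map_poly (\<lambda>c. poly c s0) p"
  have "coeff ps (degree p) = poly (lead_coeff p) s0" unfolding ps_def by (simp add: coeff_map_poly)
  hence "coeff ps (degree p) \<noteq> 0" using s0 by simp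
  hence "degree p \<le> degree ps" by (rule le_degree)
  hence "degree ps \<noteq> 0" using dp by simp
  hence "\<not> constant (poly ps)" by (simp add: constant_degree)
  then obtain t0 where t0: "poly ps t0 = 0" using fundamental_theorem_of_algebra by blast
  have "eval2 p s0 t0 = 0" using t0 unfolding ps_def by (simp add: eval2_alt)
  hence "eval2 f s0 t0 = 0" using van by blast
  hence "eval2 (A * p + B * f) s0 t0 = 0" using \<open>eval2 p s0 t0 = 0\<close>
    by (simp add: rhomD[OF rhom_eval2])
  hence "poly D s0 = 0" unfolding eq by (simp add: eval2_def)
  thus False using s0 by simp
qed

lemma dvd_coeffs_imp_dvd:
  fixes f :: "'a::idom_divide poly poly"
  assumes "\<And>n. l dvd coeff f n"
  shows "[:l:] dvd f"
proof -
  have "f = [:l:] * map_poly (\<lambda>c. c div l) f"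
    by (intro poly_eqI) (simp add: coeff_map_poly assms)
  thus ?thesis by (rule dvdI)
qed

lemma vanish_prime_const:
  fixes p f :: cpoly2
  assumes pr: "prime_elem p" and dp: "degree p = 0"
    and van: "\<forall>s t. eval2 p s t = 0 \<longrightarrow> eval2 f s t = 0"
  shows "p dvd f"
proof -
  define q where "q = coeff p 0"
  have pq: "p = [:q:]" using dp unfolding q_def by (simp add: degree_0_id)
  have p0: "p \<noteq> 0" using pr by auto
  have q0: "q \<noteq> 0" using p0 pq by auto
  have "\<not> is_unit p" using pr by (simp add: prime_elem_def)
  hence nuq: "\<not> is_unit q" unfolding pq by (simp add: is_unit_const_poly_iff)
  hence "degree q \<noteq> 0" using q0 is_unit_iff_degree by blast
  hence "\<not> constant (poly q)" by (simp add: constant_degree)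
  then obtain s0 where s0: "poly q s0 = 0" using fundamental_theorem_of_algebra by blast
  define l where "l = [:-s0, 1:]"
  have "\<forall>t. poly (map_poly (\<lambda>c. poly c s0) f) t = 0"
  proof
    fix t
    have "eval2 p s0 t = 0" unfolding pq eval2_def using s0 by simp
    hence "eval2 f s0 t = 0" using van by blast
    thus "poly (map_poly (\<lambda>c. poly c s0) f) t = 0" by (simp add: eval2_alt)
  qed
  hence mz: "map_poly (\<lambda>c. poly c s0) f = 0" using poly_all_0_iff_0 by blast
  have "l dvd coeff f n" for n
  proof -
    have "coeff (map_poly (\<lambda>c. poly c s0) f) n = 0" using mz by simp
    hence "poly (coeff f n) s0 = 0" by (simp add: coeff_map_poly)
    thus ?thesis unfolding l_def by (simp add: poly_eq_0_iff_dvd)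
  qed
  hence lf: "[:l:] dvd f" by (rule dvd_coeffs_imp_dvd)
  have "l dvd q" unfolding l_def using s0 by (simp add: poly_eq_0_iff_dvd)
  then obtain r where qr: "q = l * r" by (auto elim: dvdE)
  have "p = [:l:] * [:r:]" using pq qr by simp
  moreover have "irreducible p" using pr by (rule prime_elem_imp_irreducible)
  ultimately have "is_unit [:l:] \<or> is_unit [:r:]" using irreducibleD by blast
  moreover have "\<not> is_unit [:l:]"
  proof
    assume "is_unit [:l:]"
    hence "is_unit l" by (simp add: is_unit_const_poly_iff)
    moreover have "degree l = 1" unfolding l_def by simp
    ultimately show False using is_unit_iff_degree[of l] unfolding l_def by simp
  qed
  ultimately have "is_unit [:r:]" by blast
  hence "[:l:] * [:r:] dvd f" using lf mult_unit_dvd_iff[of "[:r:]" "[:l:]" f] by blast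
  thus ?thesis using \<open>p = [:l:] * [:r:]\<close> by simp
qed

lemma vanish_prime:
  fixes p f :: cpoly2
  assumes "prime_elem p" "\<forall>s t. eval2 p s t = 0 \<longrightarrow> eval2 f s t = 0"
  shows "p dvd f"
  using vanish_prime_deg[OF assms(1) _ assms(2)] vanish_prime_const[OF assms(1) _ assms(2)]
  by blast

lemma vanish_squarefree:
  fixes K f :: cpoly2
  assumes sq: "squarefree K" and van: "\<forall>s t. eval2 K s t = 0 \<longrightarrow> eval2 f s t = 0"
  shows "K dvd f"
proof (cases "f = 0")
  case True thus ?thesis by simp
next
  case False
  note f0 = this
  have K0: "K \<noteq> 0" using sq by auto
  have "\<forall>p. prime p \<longrightarrow> multiplicity p K \<le> multiplicity p f"
  proof (intro allI impI)
    fix p :: cpoly2 assume pp: "prime p"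
    have le1: "multiplicity p K \<le> 1" using sq K0 pp squarefree_factorial_semiring'' by blast
    show "multiplicity p K \<le> multiplicity p f"
    proof (cases "multiplicity p K = 0")
      case True thus ?thesis by simp
    next
      case False
      hence m1: "multiplicity p K = 1" using le1 by simp
      have nu: "\<not> is_unit p" using pp by (simp add: prime_def prime_elem_def)
      have "p ^ 1 dvd K" using power_dvd_iff_le_multiplicity[OF K0 nu, of 1] m1 by simp
      then obtain r where Kr: "K = p * r" by (auto elim: dvdE)
      have "\<forall>s t. eval2 p s t = 0 \<longrightarrow> eval2 f s t = 0"
        using van unfolding Kr by (simp add: rhomD[OF rhom_eval2])
      hence "p dvd f" using pp by (intro vanish_prime) (simp_all add: prime_def)
      hence "p ^ 1 dvd f" by simp
      hence "1 \<le> multiplicity p f" using power_dvd_iff_le_multiplicity[OF f0 nu, of 1] by blast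
      thus ?thesis using m1 by simp
    qed
  qed
  thus ?thesis using prime_multiplicity_le_imp_dvd[OF K0 f0] by blast
qed



definition indep :: "cpoly2 \<Rightarrow> 'i set \<Rightarrow> ('i \<Rightarrow> cpoly2) \<Rightarrow> bool" where
  "indep K J e \<longleftrightarrow> (\<forall>c. K dvd (\<Sum>j\<in>J. [:[:c j:]:] * e j) \<longrightarrow> (\<forall>j\<in>J. c j = 0))"

lemma const_mult2: "[:[:a:]:] * [:[:b:]:] = ([:[:a * b:]:] :: 'a::comm_ring_1 poly poly)"
  by simp

lemma reduce:
  fixes I :: "'i set"
  assumes "finite I"
  shows "\<exists>(J::'i set) a e Q. finite J \<and> indep K J e \<and>
    (\<Sum>i\<in>I. embed_xy (r i) * embed_st (b i)) = embed_st K * Q + (\<Sum>j\<in>J. embed_xy (a j) * embed_st (e j))"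
  using assms
proof (induction "card I" arbitrary: I r rule: less_induct)
  case less
  show ?case
  proof (cases "indep K I b")
    case True
    have eq0: "(\<Sum>i\<in>I. embed_xy (r i) * embed_st (b i)) = embed_st K * 0 + (\<Sum>i\<in>I. embed_xy (r i) * embed_st (b i))" by simp
    have c: "finite I \<and> indep K I b \<and> (\<Sum>i\<in>I. embed_xy (r i) * embed_st (b i)) = embed_st K * 0 + (\<Sum>i\<in>I. embed_xy (r i) * embed_st (b i))"
      using less.prems True eq0 by blast
    show ?thesis
      apply (rule exI[of _ I]) apply (rule exI[of _ r]) apply (rule exI[of _ b]) apply (rule exI[of _ 0])
      by (rule c)
  next
    case False
    then obtain c k where ck: "K dvd (\<Sum>i\<in>I. [:[:c i:]:] * b i)" and kI: "k \<in> I" and ck0: "c k \<noteq> 0"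
      unfolding indep_def by blast
    then obtain h where h: "(\<Sum>i\<in>I. [:[:c i:]:] * b i) = K * h" by (auto elim: dvdE)
    define u where "u = embed_xy (r k) * embed_xy [:[:1 / c k:]:]"
    define r' where "r' i = r i - r k * [:[:c i / c k:]:]" for i
    have rk: "r' k = 0" using ck0 by (simp add: r'_def one11)
    have E1: "embed_xy (r' i) = embed_xy (r i) - u * embed_xy [:[:c i:]:]" for i
    proof -
      have cc: "r k * [:[:c i / c k:]:] = r k * ([:[:1 / c k:]:] * [:[:c i:]:])" by simp
      have "embed_xy (r' i) = embed_xy (r i) - embed_xy (r k * ([:[:1 / c k:]:] * [:[:c i:]:]))"
        unfolding r'_def cc by (rule rhom_diff[OF rhom_embed_xy])
      also have "\<dots> = embed_xy (r i) - u * embed_xy [:[:c i:]:]"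
        unfolding u_def by (simp only: rhomD(4)[OF rhom_embed_xy] mult.assoc)
      finally show ?thesis .
    qed
    have B1: "embed_st (\<Sum>i\<in>I. [:[:c i:]:] * b i) = (\<Sum>i\<in>I. embed_xy [:[:c i:]:] * embed_st (b i))"
      by (simp only: rhom_sum[OF rhom_embed_st] rhomD(4)[OF rhom_embed_st] embed_xy_const_st)
    have "(\<Sum>i\<in>I. embed_xy (r i) * embed_st (b i))
        = (\<Sum>i\<in>I. embed_xy (r' i) * embed_st (b i)) + u * (\<Sum>i\<in>I. embed_xy [:[:c i:]:] * embed_st (b i))"
      by (simp add: E1 algebra_simps sum_distrib_left sum_subtractf)
    also have "(\<Sum>i\<in>I. embed_xy [:[:c i:]:] * embed_st (b i)) = embed_st K * embed_st h"
      using B1 h by (simp add: rhomD[OF rhom_embed_st])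
    also have "(\<Sum>i\<in>I. embed_xy (r' i) * embed_st (b i)) = (\<Sum>i\<in>I - {k}. embed_xy (r' i) * embed_st (b i))"
      using sum.remove[OF less.prems kI, of "\<lambda>i. embed_xy (r' i) * embed_st (b i)"] rk
      by (simp add: rhomD[OF rhom_embed_xy])
    finally have eq: "(\<Sum>i\<in>I. embed_xy (r i) * embed_st (b i)) =
       (\<Sum>i\<in>I - {k}. embed_xy (r' i) * embed_st (b i)) + u * (embed_st K * embed_st h)" .
    have "card I > 0" using less.prems kI card_gt_0_iff by blast
    hence card_lt: "card (I - {k}) < card I" using less.prems kI by simp
    have "\<exists>(J::'i set) a e Q. finite J \<and> indep K J e \<and>
    (\<Sum>i\<in>I - {k}. embed_xy (r' i) * embed_st (b i)) = embed_st K * Q + (\<Sum>j\<in>J. embed_xy (a j) * embed_st (e j))"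
      by (rule less.hyps[OF card_lt]) (simp add: less.prems)
    then show ?thesis
    proof (elim exE conjE)
      fix J :: "'i set" and a e Q
      assume J1: "finite J" and J2: "indep K J e"
        and Q: "(\<Sum>i\<in>I - {k}. embed_xy (r' i) * embed_st (b i)) = embed_st K * Q + (\<Sum>j\<in>J. embed_xy (a j) * embed_st (e j))"
      have eqq: "(\<Sum>i\<in>I. embed_xy (r i) * embed_st (b i)) = embed_st K * (Q + u * embed_st h) + (\<Sum>j\<in>J. embed_xy (a j) * embed_st (e j))"
        unfolding eq Q by (simp add: algebra_simps)
      note c2 = conjI[OF J1 conjI[OF J2 eqq]]
      show ?thesis
        apply (rule exI[of _ J]) apply (rule exI[of _ a]) apply (rule exI[of _ e]) apply (rule exI[of _ "Q + u * embed_st h"])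
        by (rule c2)
    qed
  qed
qed

lemma monom_sum_gen: "finite A \<Longrightarrow> monom (sum f A) n = (\<Sum>x\<in>A. monom (f x) n)"
  by (induction A rule: finite_induct) (simp_all add: add_monom[symmetric])

lemma term_monom: "embed_xy r * embed_st (monom (monom 1 i) j) = monom (monom r i) j"
proof -
  have "embed_st (monom (monom 1 i) j) = monom (monom 1 i) j"
    unfolding embed_st_def by (simp add: map_poly_monom one11)
  thus ?thesis unfolding embed_xy_def by (simp add: smult_monom)
qed

lemma decomp: "\<exists>I r b. finite (I :: (nat \<times> nat) set) \<and> F = (\<Sum>p\<in>I. embed_xy (r p) * embed_st (b p))"
proof -
  define I where "I = Sigma {..degree F} (\<lambda>j. {..degree (coeff F j)})"
  define r where "r = (\<lambda>(j, i). coeff (coeff F j) i)"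
  define b where "b = (\<lambda>(j::nat, i::nat). monom (monom (1::complex) i) j)"
  have "F = (\<Sum>j\<le>degree F. monom (coeff F j) j)" by (simp add: poly_as_sum_of_monoms)
  also have "\<dots> = (\<Sum>j\<le>degree F. \<Sum>i\<le>degree (coeff F j). monom (monom (coeff (coeff F j) i) i) j)"
    by (intro sum.cong refl) (simp add: monom_sum_gen[symmetric] poly_as_sum_of_monoms)
  also have "\<dots> = (\<Sum>(j,i)\<in>I. monom (monom (coeff (coeff F j) i) i) j)"
    unfolding I_def by (rule sum.Sigma) auto
  also have "\<dots> = (\<Sum>p\<in>I. embed_xy (r p) * embed_st (b p))"
    by (intro sum.cong refl) (auto simp: r_def b_def term_monom)
  finally have "F = (\<Sum>p\<in>I. embed_xy (r p) * embed_st (b p))" .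
  moreover have "finite I" unfolding I_def by auto
  ultimately show ?thesis by blast
qed

theorem theorem2p2:
  fixes F :: cpoly4 and G K :: cpoly2
  assumes "\<not> is_const2 G" and "\<not> is_const2 K"
    and "squarefree G" and "squarefree K"
  shows "(\<forall>x y s t. eval2 G x y = 0 \<and> eval2 K s t = 0 \<longrightarrow> eval4 F x y s t = 0)
         \<longleftrightarrow> cartesian G K F"
proof
  assume van: "\<forall>x y s t. eval2 G x y = 0 \<and> eval2 K s t = 0 \<longrightarrow> eval4 F x y s t = 0"
  obtain I r b where fI: "finite (I :: (nat \<times> nat) set)" and FI: "F = (\<Sum>p\<in>I. embed_xy (r p) * embed_st (b p))"
    using decomp[of F] by iprover
  have ex: "\<exists>(J::(nat \<times> nat) set) a e Q. finite J \<and> indep K J e \<and>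
    (\<Sum>i\<in>I. embed_xy (r i) * embed_st (b i)) = embed_st K * Q + (\<Sum>j\<in>J. embed_xy (a j) * embed_st (e j))"
    by (rule reduce[OF fI])
  obtain J :: "(nat \<times> nat) set" and a e Q where fJ: "finite J" and ind: "indep K J e"
    and SQ: "(\<Sum>i\<in>I. embed_xy (r i) * embed_st (b i)) = embed_st K * Q + (\<Sum>j\<in>J. embed_xy (a j) * embed_st (e j))"
    using ex by iprover
  have FQ: "F = embed_st K * Q + (\<Sum>j\<in>J. embed_xy (a j) * embed_st (e j))"
    using FI SQ by (rule trans)
  have "\<forall>j\<in>J. G dvd a j"
  proof
    fix j assume jJ: "j \<in> J"
    have "\<forall>x y. eval2 G x y = 0 \<longrightarrow> eval2 (a j) x y = 0"
    proof (intro allI impI)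
      fix x y assume Gxy: "eval2 G x y = 0"
      define g where "g = (\<Sum>j\<in>J. [:[:eval2 (a j) x y:]:] * e j)"
      have "\<forall>s t. eval2 K s t = 0 \<longrightarrow> eval2 g s t = 0"
      proof (intro allI impI)
        fix s t assume Kst: "eval2 K s t = 0"
        have "eval4 F x y s t = 0" using van Gxy Kst by blast
        moreover have "eval4 F x y s t = eval2 K s t * eval4 Q x y s t + (\<Sum>j\<in>J. eval2 (a j) x y * eval2 (e j) s t)"
          unfolding FQ by (simp add: rhomD[OF rhom_eval4] rhom_sum[OF rhom_eval4])
        moreover have "eval2 g s t = (\<Sum>j\<in>J. eval2 (a j) x y * eval2 (e j) s t)"
          unfolding g_def by (simp only: rhomD(4)[OF rhom_eval2] rhom_sum[OF rhom_eval2] eval2_const)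
        ultimately show "eval2 g s t = 0" using Kst by simp
      qed
      hence Kg: "K dvd g" by (rule vanish_squarefree[OF assms(4)])
      have "K dvd (\<Sum>j\<in>J. [:[:(\<lambda>j. eval2 (a j) x y) j:]:] * e j) \<longrightarrow> (\<forall>j\<in>J. (\<lambda>j. eval2 (a j) x y) j = 0)"
        using ind unfolding indep_def by (rule spec)
      hence "\<forall>j\<in>J. eval2 (a j) x y = 0" using Kg unfolding g_def by simp
      thus "eval2 (a j) x y = 0" using jJ by blast
    qed
    thus "G dvd a j" by (rule vanish_squarefree[OF assms(3)])
  qed
  hence "\<forall>j\<in>J. \<exists>q. a j = G * q" by (auto elim: dvdE)
  then obtain a' where a': "\<forall>j\<in>J. a j = G * a' j" using bchoice by iprover
  have "(\<Sum>j\<in>J. embed_xy (a j) * embed_st (e j)) = (\<Sum>j\<in>J. embed_xy G * (embed_xy (a' j) * embed_st (e j)))"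
    using a' by (intro sum.cong refl) (simp add: rhomD[OF rhom_embed_xy] mult.assoc)
  also have "\<dots> = embed_xy G * (\<Sum>j\<in>J. embed_xy (a' j) * embed_st (e j))"
    by (simp add: sum_distrib_left)
  finally have "F = embed_xy G * (\<Sum>j\<in>J. embed_xy (a' j) * embed_st (e j)) + embed_st K * Q"
    using FQ by (simp add: add.commute)
  thus "cartesian G K F" unfolding cartesian_def by (intro exI)
next
  assume "cartesian G K F"
  then obtain H L where "F = embed_xy G * H + embed_st K * L" unfolding cartesian_def by iprover
  thus "\<forall>x y s t. eval2 G x y = 0 \<and> eval2 K s t = 0 \<longrightarrow> eval4 F x y s t = 0"
    by (simp add: rhomD[OF rhom_eval4])
qed


end
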